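(* Let $p,q,r\in(0,1/36)$, $h=1/2$, $a=1/3$, and let $\mathcal S=\{S_1,\dots,S_6\}$ be the system on $\mathbb R$ given by $S_1(x)=px$, $S_2(x)=a+rx$, $S_3(x)=h-qx$, $S_4(x)=h-r+rx$, $S_5(x)=1-a-rx$, $S_6(x)=1-r+rx$. If $\log p/\log r$ is irrational, then $\mathcal S$ does not satisfy the Weak Separation Property (for every $q\in(0,1/36)$).
   Context: For a system $\{S_1,\dots,S_m\}$ of contracting similarities of $\mathbb R$, let $\mathcal F=\{S_{\mathbf i}^{-1}S_{\mathbf j}:\mathbf i,\mathbf j\in I^*\}$, where $I^*$ is the set of finite words over $\{1,\dots,m\}$ and $S_{j_1\dots j_k}=S_{j_1}\circ\dots\circ S_{j_k}$. The system satisfies the Weak Separation Property (WSP) if $\mathrm{Id}\notin\overline{\mathcal F\setminus\{\mathrm{Id}\}}$, the closure taken in the space of affine maps $x\mapsto \lambda x+c$ of $\mathbb R$ with the topology of convergence of the coefficients $(\lambda,c)$. *)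

theory Defs
  imports "HOL-Analysis.Analysis"
begin

text \<open>An affine map x \<mapsto> lambda*x + c of the real line is represented by its
coefficient pair (lambda, c) :: real \<times> real; the product topology on pairs is the
topology of convergence of the coefficients.\<close>

type_synonym aff = "real \<times> real"

definition aff_apply :: "aff \<Rightarrow> real \<Rightarrow> real" where
  "aff_apply f x = fst f * x + snd f"

definition aff_comp :: "aff \<Rightarrow> aff \<Rightarrow> aff" where
  "aff_comp f g = (fst f * fst g, fst f * snd g + snd f)"

definition aff_inv :: "aff \<Rightarrow> aff" where
  "aff_inv f = (1 / fst f, - snd f / fst f)"

definition aff_id :: aff where
  "aff_id = (1, 0)"

definition word_map :: "(nat \<Rightarrow> aff) \<Rightarrow> nat list \<Rightarrow> aff" where
  "word_map S w = foldr (\<lambda>i acc. aff_comp (S i) acc) w aff_id"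

definition words :: "nat \<Rightarrow> nat list set" where
  "words m = {w. set w \<subseteq> {1..m}}"

definition F_set :: "(nat \<Rightarrow> aff) \<Rightarrow> nat \<Rightarrow> aff set" where
  "F_set S m = {aff_comp (aff_inv (word_map S i)) (word_map S j) | i j.
                  i \<in> words m \<and> j \<in> words m}"

definition WSP :: "(nat \<Rightarrow> aff) \<Rightarrow> nat \<Rightarrow> bool" where
  "WSP S m \<longleftrightarrow> aff_id \<notin> closure (F_set S m - {aff_id})"

definition ex_sys :: "real \<Rightarrow> real \<Rightarrow> real \<Rightarrow> nat \<Rightarrow> aff" where
  "ex_sys p q r i =
     (let h = 1/2; a = 1/3 in
      if i = 1 then (p, 0)
      else if i = 2 then (r, a)
      else if i = 3 then (-q, h)
      else if i = 4 then (r, h - r)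
      else if i = 5 then (-r, 1 - a)
      else (r, 1 - r))"

end

theory Submission
  imports Defs "HOL-Analysis.Kronecker_Approximation_Theorem"
begin

lemma dens:
  fixes \<theta> x \<epsilon> :: real
  assumes "\<theta> \<notin> \<rat>" "\<theta> > 0" "x > 0" "\<epsilon> > 0"
  obtains M N :: nat where "x < real (Suc M) - real N * \<theta>" "real (Suc M) - real N * \<theta> < x + \<epsilon>"
proof -
  obtain h k :: int where hk: "0 < k" "\<bar>real_of_int k * \<theta> - real_of_int h - (-(x + \<epsilon>/2))\<bar> < \<epsilon>/2"
    using sequence_of_fractional_parts_is_dense[OF assms(1) half_gt_zero[OF assms(4)], of "-(x + \<epsilon>/2)"] by blast
  have v: "x < real_of_int h - real_of_int k * \<theta>" "real_of_int h - real_of_int k * \<theta> < x + \<epsilon>"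
    using hk(2) unfolding abs_less_iff by linarith+
  have "real_of_int k * \<theta> > 0" using hk(1) assms(2) by simp
  hence "h > 0" using v assms(3) by linarith
  define M where "M = nat (h - 1)"
  define N where "N = nat k"
  have "real (Suc M) = real_of_int h" using \<open>h > 0\<close> by (simp add: M_def)
  moreover have "real N = real_of_int k" using hk(1) by (simp add: N_def)
  ultimately show ?thesis using that[of M N] v by simp
qed

lemma wm_cons: "word_map S (x # w) = aff_comp (S x) (word_map S w)"
  by (simp add: word_map_def)

lemma wm_rep1: "word_map (ex_sys p q r) (replicate N 1 @ w) =
   (p^N * fst (word_map (ex_sys p q r) w), p^N * snd (word_map (ex_sys p q r) w))"
  by (induction N) (auto simp: wm_cons aff_comp_def ex_sys_def)

lemma wm_rep6: "word_map (ex_sys p q r) (replicate M 6 @ w) =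
   (r^M * fst (word_map (ex_sys p q r) w), 1 - r^M + r^M * snd (word_map (ex_sys p q r) w))"
  by (induction M) (auto simp: wm_cons aff_comp_def ex_sys_def algebra_simps)

lemma elem:
  fixes p q r :: real
  fixes M N :: nat
  assumes "0 < p" "0 < q" "0 < r"
  defines "t \<equiv> r^(Suc M) / (q * p^N)"
  shows "(t, (t - 1) / (3 * r)) \<in> F_set (ex_sys p q r) 6"
proof -
  let ?S = "ex_sys p q r"
  let ?i = "3 # replicate N 1 @ [2]"
  let ?j = "4 # replicate M 6 @ [5]"
  have w2: "word_map ?S [2] = (r, 1/3)" by (simp add: word_map_def aff_comp_def aff_id_def ex_sys_def)
  have w5: "word_map ?S [5] = (-r, 2/3)" by (simp add: word_map_def aff_comp_def aff_id_def ex_sys_def)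
  have A: "word_map ?S ?i = (- q * p^N * r, 1/2 - q * p^N / 3)"
    by (simp only: wm_cons wm_rep1 w2) (simp add: aff_comp_def ex_sys_def word_map_def aff_id_def)
  have B: "word_map ?S ?j = (-(r^(Suc (Suc M))), 1/2 - r^(Suc M) / 3)"
    by (simp only: wm_cons wm_rep6 w5) (simp add: aff_comp_def ex_sys_def algebra_simps word_map_def aff_id_def)
  have "aff_comp (aff_inv (word_map ?S ?i)) (word_map ?S ?j) = (t, (t - 1) / (3 * r))"
    unfolding A B aff_comp_def aff_inv_def t_def using assms
    by (auto simp: field_simps)
  moreover have "?i \<in> words 6" "?j \<in> words 6" by (auto simp: words_def)
  ultimately show ?thesis unfolding F_set_def mem_Collect_eq
    by (intro exI[of _ ?i] exI[of _ ?j]) auto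
qed

theorem mainTheorem13:
  fixes p q r :: real
  assumes "0 < p" "p < 1/36" and "0 < q" "q < 1/36" and "0 < r" "r < 1/36"
    and "ln p / ln r \<notin> \<rat>"
  shows "\<not> WSP (ex_sys p q r) 6"
proof -
  have lp: "ln p < 0" "ln r < 0" "ln q < 0" using assms by auto
  define \<theta> where "\<theta> = ln p / ln r"
  define x where "x = ln q / ln r"
  have th: "\<theta> > 0" "x > 0" using lp by (auto simp: \<theta>_def x_def divide_neg_neg)
  have "aff_id \<in> closure (F_set (ex_sys p q r) 6 - {aff_id})"
    unfolding closure_approachable
  proof (intro allI impI)
    fix e :: real assume e: "e > 0"
    define \<delta> where "\<delta> = min (1/2) (e / (2 + 1/r))"
    have d: "0 < \<delta>" "\<delta> \<le> 1/2" "\<delta> \<le> e / (2 + 1/r)" proof -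
      have "0 < 2 + 1/r" using assms by (simp add: add_pos_pos)
      thus "0 < \<delta>" using e by (simp add: \<delta>_def)
    qed (auto simp: \<delta>_def min_def)
    define \<epsilon> where "\<epsilon> = ln (1 - \<delta>) / ln r"
    have "ln (1 - \<delta>) < 0" using d by simp
    hence eps: "\<epsilon> > 0" using lp by (simp add: \<epsilon>_def divide_neg_neg)
    obtain M N :: nat where MN: "x < real (Suc M) - real N * \<theta>" "real (Suc M) - real N * \<theta> < x + \<epsilon>"
      using dens[OF assms(7)[folded \<theta>_def] th eps] by blast
    define t where "t = r^(Suc M) / (q * p^N)"
    have tpos: "t > 0" using assms by (simp add: t_def)
    have lt: "ln t = ln r * (real (Suc M) - real N * \<theta> - x)"
      using assms lp unfolding t_def \<theta>_def x_def
      by (simp add: ln_div ln_mult ln_realpow algebra_simps)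
    have "ln r * (real (Suc M) - real N * \<theta> - x) < 0"
      using MN lp by (simp add: mult_neg_pos)
    hence t1: "t < 1" using lt tpos by (metis ln_less_zero_iff)
    have "ln r * (real (Suc M) - real N * \<theta> - x) > ln r * \<epsilon>"
      using MN lp by (intro mult_strict_left_mono_neg) auto
    also have "ln r * \<epsilon> = ln (1 - \<delta>)" using lp by (simp add: \<epsilon>_def)
    finally have "ln (1 - \<delta>) < ln t" using lt by simp
    hence t2: "1 - \<delta> < t" using d tpos by simp
    have mem: "(t, (t - 1) / (3 * r)) \<in> F_set (ex_sys p q r) 6"
      using elem[OF assms(1,3,5)] unfolding t_def by blast
    have ne: "(t, (t - 1) / (3 * r)) \<noteq> aff_id" using t1 by (simp add: aff_id_def)
    have "dist (t, (t - 1) / (3 * r)) aff_id = sqrt ((t - 1)^2 + ((t - 1) / (3 * r))^2)"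
      unfolding aff_id_def dist_Pair_Pair dist_real_def by (simp only: power2_abs diff_zero)
    also have "\<dots> \<le> \<bar>t - 1\<bar> + \<bar>(t - 1) / (3 * r)\<bar>"
      by (rule sqrt_sum_squares_le_sum_abs)
    also have "\<dots> = (1 - t) * (1 + 1 / (3 * r))" using t1 assms by (simp add: abs_div field_simps)
    also have "\<dots> < \<delta> * (2 + 1 / r)"
    proof -
      have "1 + 1 / (3 * r) \<le> 2 + 1/r" using assms by (simp add: field_simps)
      moreover have "1 - t < \<delta>" using t2 by simp
      moreover have "0 < 1 + 1 / (3 * r)" using assms by (intro add_pos_pos) auto
      ultimately show ?thesis using t1
        by (meson diff_gt_0_iff_gt less_le_trans mult_strict_right_mono mult_left_mono less_imp_le d(1) order_less_le_trans)
    qed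
    also have "\<dots> \<le> e" using d assms by (simp add: field_simps)
    finally show "\<exists>y\<in>F_set (ex_sys p q r) 6 - {aff_id}. dist y aff_id < e"
      using mem ne by blast
  qed
  thus ?thesis unfolding WSP_def by simp
qed

end
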